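(* Suppose $\Delta$ is full dimensional and convex. Given $\epsilon>0$ and $x\in\mathcal X$, for any $M\ge1$, if $\delta^{(1)},\dots,\delta^{(M)}$ are i.i.d. samples from $\phi_{\kappa(\epsilon),x}$, then $$\mathbb E_{\phi^M_{\kappa(\epsilon),x}}\Big[\max_{1\le i\le M}g(x,\delta^{(i)})\Big]\ge G(x)-\epsilon.$$
   Context: $\mathcal X\subset\mathbb R^n$ compact convex; $\Delta\subset\mathbb R^d$ compact; $g:\mathcal X\times\Delta\to\mathbb R$ with $\delta\mapsto g(x,\delta)$ $L_{g,\Delta}$-Lipschitz (Euclidean norm) for each $x$; $G(x):=\max_{\delta\in\Delta}g(x,\delta)$. For $\kappa\in(0,1]$, $\phi_{\kappa,x}(\delta):=\exp(g(x,\delta)/\kappa)/\int_\Delta\exp(g(x,\delta')/\kappa)d\delta'$ is a probability density on $\Delta$. $R_\Delta$ is the radius of the largest Euclidean ball $B_{R_\Delta}(\delta_0)\subseteq\Delta$; $r:=\mathrm{vol}(B_{R_\Delta}(\delta_0))/\mathrm{vol}(\Delta)$; $D_\Delta:=\max_{\delta,\delta'\in\Delta}\|\delta-\delta'\|$; $C:=L_{g,\Delta}(R_\Delta+D_\Delta)-\log r$; $\kappa(\epsilon):=\min\{\frac{\epsilon}{2C},(\frac{\epsilon}{2d})^2,1\}$. $\phi^M$ denotes the $M$-fold product measure. *)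

theory Defs
  imports "HOL-Analysis.Analysis"
begin

definition inradius :: "'b::euclidean_space set \<Rightarrow> real" where
  "inradius D = (SUP r \<in> {r. r \<ge> 0 \<and> (\<exists>c. cball c r \<subseteq> D)}. r)"

text \<open>r = vol(B_{R}(delta0)) / vol(Delta); the volume of a ball does not depend on its centre.\<close>
definition vol_ratio :: "'b::euclidean_space set \<Rightarrow> real" where
  "vol_ratio D = measure lborel (cball (0::'b) (inradius D)) / measure lborel D"

definition constC :: "real \<Rightarrow> 'b::euclidean_space set \<Rightarrow> real" where
  "constC L D = L * (inradius D + diameter D) - ln (vol_ratio D)"

text \<open>kappa(eps) := min {eps/(2C), (eps/(2d))^2, 1}; if C = 0 the first term is +infinity.\<close>
definition kappa :: "real \<Rightarrow> 'b::euclidean_space set \<Rightarrow> real \<Rightarrow> real" where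
  "kappa L D eps =
     (let d = real DIM('b);
          m = min ((eps / (2 * d))\<^sup>2) 1
      in if constC L D > 0 then min (eps / (2 * constC L D)) m else m)"

definition phi :: "('a \<Rightarrow> 'b::euclidean_space \<Rightarrow> real) \<Rightarrow> 'b set \<Rightarrow> real \<Rightarrow> 'a \<Rightarrow> 'b \<Rightarrow> real" where
  "phi g D k x \<delta> = exp (g x \<delta> / k) / (LINT \<delta>':D|lborel. exp (g x \<delta>' / k))"

definition phi_measure :: "('a \<Rightarrow> 'b::euclidean_space \<Rightarrow> real) \<Rightarrow> 'b set \<Rightarrow> real \<Rightarrow> 'a \<Rightarrow> 'b measure" where
  "phi_measure g D k x = density (restrict_space lborel D) (\<lambda>\<delta>. ennreal (phi g D k x \<delta>))"

definition Gmax :: "('a \<Rightarrow> 'b \<Rightarrow> real) \<Rightarrow> 'b set \<Rightarrow> 'a \<Rightarrow> real" where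
  "Gmax g D x = (SUP \<delta> \<in> D. g x \<delta>)"

end

theory Submission
  imports Defs "HOL-Probability.Probability"
begin


lemma gibbs_lower:
  fixes f :: "'b::euclidean_space \<Rightarrow> real" and D :: "'b set"
  assumes cD: "compact D" and cf: "continuous_on D f" and ne: "D \<noteq> {}"
    and V: "measure lborel D > 0" and k: "k > 0"
  defines "Z \<equiv> integral\<^sup>L lborel (\<lambda>y. indicator D y *\<^sub>R exp (f y / k))"
  shows "Z > 0" and "integral\<^sup>L lborel (\<lambda>y. indicator D y *\<^sub>R (exp (f y / k) / Z * f y))
      \<ge> k * (ln Z - ln (measure lborel D))"
proof -
  have Dm: "D \<in> sets lborel" using cD by (simp add: compact_imp_closed)
  have Dfin: "emeasure lborel D < \<infinity>" using cD by (rule emeasure_compact_finite)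
  define V where "V = measure lborel D"
  have ce: "continuous_on D (\<lambda>y. exp (f y / k))" using k by (intro continuous_intros cf) auto
  obtain m where m: "m \<in> D" "\<And>y. y \<in> D \<Longrightarrow> f m \<le> f y"
    using continuous_attains_inf[OF cD ne cf] by blast
  have int1: "integrable lborel (\<lambda>y. indicator D y *\<^sub>R exp (f y / k))"
    by (rule borel_integrable_compact[OF cD ce])
  have intI: "integrable lborel (indicator D :: 'b \<Rightarrow> real)"
    using Dm Dfin by (simp add: integrable_indicator_iff)
  have "integral\<^sup>L lborel (\<lambda>y. indicator D y *\<^sub>R exp (f m / k)) \<le> Z"
    unfolding Z_def
  proof (rule integral_mono)
    show "integrable lborel (\<lambda>y. indicator D y *\<^sub>R exp (f m / k))"
      using intI by (rule integrable_scaleR_left)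
    show "integrable lborel (\<lambda>y. indicator D y *\<^sub>R exp (f y / k))" by (rule int1)
    fix y show "indicator D y *\<^sub>R exp (f m / k) \<le> indicator D y *\<^sub>R exp (f y / k)"
      using m(2)[of y] k by (auto simp: indicator_def divide_right_mono)
  qed
  moreover have "integral\<^sup>L lborel (\<lambda>y. indicator D y *\<^sub>R exp (f m / k)) = V * exp (f m / k)"
    using Dm Dfin by (simp add: V_def integral_indicator)
  moreover have "V * exp (f m / k) > 0" using V V_def by simp
  ultimately show Zpos: "Z > 0" by linarith
  show "integral\<^sup>L lborel (\<lambda>y. indicator D y *\<^sub>R (exp (f y / k) / Z * f y))
      \<ge> k * (ln Z - ln (measure lborel D))"
  proof -
    define c where "c = ln Z - ln V + 1"
    have int2: "integrable lborel (\<lambda>y. indicator D y *\<^sub>R (exp (f y / k) / Z * f y))"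
      by (rule borel_integrable_compact[OF cD]) (use k Zpos in \<open>intro continuous_intros cf, auto\<close>)
    have int3: "integrable lborel (\<lambda>y. (k * c / Z) * (indicator D y *\<^sub>R exp (f y / k)) - (k / V) * indicator D y)"
      using int1 intI by auto
    have pw: "(k * c / Z) * (indicator D y *\<^sub>R exp (f y / k)) - (k / V) * indicator D y
          \<le> indicator D y *\<^sub>R (exp (f y / k) / Z * f y)" for y
    proof (cases "y \<in> D")
      case True
      define p where "p = exp (f y / k) / Z"
      have pp: "p > 0" using Zpos by (simp add: p_def)
      have Vp: "V > 0" using V V_def by simp
      have "ln (1 / (p * V)) \<le> 1 / (p * V) - 1" using pp Vp by (intro ln_le_minus_one) auto
      moreover have "ln (1 / (p * V)) = - (f y / k) + ln Z - ln V"
        using pp Vp Zpos by (simp add: p_def ln_div ln_mult)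
      ultimately have "- (f y / k) + ln Z - ln V \<le> 1 / (p * V) - 1" by simp
      hence "p * (- (f y / k) + ln Z - ln V) \<le> p * (1 / (p * V) - 1)"
        using pp by (intro mult_left_mono) auto
      moreover have "p * (1 / (p * V) - 1) = 1 / V - p" using pp Vp by (simp add: field_simps)
      ultimately have "p * (- (f y / k) + ln Z - ln V) \<le> 1 / V - p" by simp
      hence "p * c - 1 / V \<le> p * f y / k" unfolding c_def by (simp add: algebra_simps)
      hence "k * (p * c - 1 / V) \<le> k * (p * f y / k)" using k by (intro mult_left_mono) auto
      thus ?thesis using True k by (simp add: p_def field_simps)
    qed simp
    have "integral\<^sup>L lborel (\<lambda>y. (k * c / Z) * (indicator D y *\<^sub>R exp (f y / k)) - (k / V) * indicator D y)
        \<le> integral\<^sup>L lborel (\<lambda>y. indicator D y *\<^sub>R (exp (f y / k) / Z * f y))"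
      by (rule integral_mono[OF int3 int2 pw])
    moreover have "integral\<^sup>L lborel (\<lambda>y. (k * c / Z) * (indicator D y *\<^sub>R exp (f y / k)) - (k / V) * indicator D y)
        = (k * c / Z) * Z - (k / V) * V"
      using int1 intI Dm Dfin by (simp add: Z_def V_def integral_indicator)
    moreover have "(k * c / Z) * Z - (k / V) * V = k * (ln Z - ln V)"
      using Zpos V V_def k by (simp add: c_def field_simps)
    ultimately show ?thesis by (simp add: V_def)
  qed
qed



lemma ball_lower:
  fixes f :: "'b::euclidean_space \<Rightarrow> real" and D :: "'b set"
  assumes cD: "compact D" and cvx: "convex D" and bl: "cball c R' \<subseteq> D" and R': "R' > 0"
    and k: "0 < k" "k \<le> 1" and s: "s \<in> D" and lip: "L-lipschitz_on D f"
  shows "integral\<^sup>L lborel (\<lambda>y. indicator D y *\<^sub>R exp (f y / k))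
     \<ge> unit_ball_vol DIM('b) * (k * R') ^ DIM('b) * exp (f s / k - L * diameter D)"
proof -
  define a where "a = s + k *\<^sub>R (c - s)"
  define A where "A = cball a (k * R')"
  define E where "E = exp (f s / k - L * diameter D)"
  have L0: "L \<ge> 0" and Ld: "\<And>x y. x \<in> D \<Longrightarrow> y \<in> D \<Longrightarrow> dist (f x) (f y) \<le> L * dist x y"
    using lip by (auto simp: lipschitz_on_def)
  have bD: "bounded D" using cD by (rule compact_imp_bounded)
  have key: "y \<in> D \<and> f s / k - L * diameter D \<le> f y / k" if y: "y \<in> A" for y
  proof -
    define b where "b = c + (1 / k) *\<^sub>R (y - a)"
    have "dist c b = norm ((1 / k) *\<^sub>R (y - a))" by (simp add: b_def dist_norm)
    also have "\<dots> = dist y a / k" using k by (simp add: dist_norm)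
    also have "\<dots> \<le> R'" using y k by (simp add: A_def dist_commute divide_le_eq mult.commute)
    finally have bD': "b \<in> D" using bl by auto
    have yeq: "y = (1 - k) *\<^sub>R s + k *\<^sub>R b"
      using k by (simp add: b_def a_def algebra_simps)
    have yD: "y \<in> D" using convexD[OF cvx s bD', of "1 - k" k] k yeq by simp
    have "dist y s = norm (k *\<^sub>R (b - s))" by (simp add: yeq dist_norm algebra_simps)
    also have "\<dots> = k * dist b s" using k by (simp add: dist_norm)
    also have "\<dots> \<le> k * diameter D"
      using diameter_bounded_bound[OF bD bD' s] k by (intro mult_left_mono) auto
    finally have "dist y s \<le> k * diameter D" .
    hence "dist (f y) (f s) \<le> L * (k * diameter D)"
      using Ld[OF yD s] L0 by (meson mult_left_mono order_trans)
    hence "f s - L * (k * diameter D) \<le> f y" by (simp add: dist_real_def abs_le_iff)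
    hence "(f s - L * (k * diameter D)) / k \<le> f y / k" using k by (intro divide_right_mono) auto
    moreover have "(f s - L * (k * diameter D)) / k = f s / k - L * diameter D" using k by (simp add: field_simps)
    ultimately show ?thesis using yD by simp
  qed
  have Am: "A \<in> sets lborel" by (simp add: A_def)
  have Afin: "emeasure lborel A < \<infinity>" unfolding A_def by (rule emeasure_compact_finite) simp
  have intA: "integrable lborel (indicator A :: 'b \<Rightarrow> real)"
    using Am Afin by (simp add: integrable_indicator_iff)
  have ce: "continuous_on D (\<lambda>y. exp (f y / k))"
    using k lipschitz_on_continuous_on[OF lip] by (intro continuous_intros) auto
  have "integral\<^sup>L lborel (\<lambda>y. indicator A y *\<^sub>R E) \<le> integral\<^sup>L lborel (\<lambda>y. indicator D y *\<^sub>R exp (f y / k))"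
  proof (rule integral_mono)
    show "integrable lborel (\<lambda>y. indicator A y *\<^sub>R E)" using intA by (rule integrable_scaleR_left)
    show "integrable lborel (\<lambda>y. indicator D y *\<^sub>R exp (f y / k))" by (rule borel_integrable_compact[OF cD ce])
    fix y show "indicator A y *\<^sub>R E \<le> indicator D y *\<^sub>R exp (f y / k)"
      using key[of y] by (auto simp: indicator_def E_def)
  qed
  moreover have "integral\<^sup>L lborel (\<lambda>y. indicator A y *\<^sub>R E) = measure lborel A * E"
    using Am Afin by (simp add: integral_indicator)
  moreover have "measure lborel A = unit_ball_vol DIM('b) * (k * R') ^ DIM('b)"
    unfolding A_def measure_def using k R' by (subst emeasure_cball) auto
  ultimately show ?thesis by (simp add: E_def)
qed



lemma prob_part:
  fixes h :: "'b::euclidean_space \<Rightarrow> real" and D :: "'b set" and M :: nat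
  assumes cD: "compact D" and ch: "continuous_on D h" and k: "k > 0" and M: "M \<ge> 1"
  defines "Z \<equiv> integral\<^sup>L lborel (\<lambda>y. indicator D y *\<^sub>R exp (h y / k))"
  assumes Zpos: "Z > 0"
  defines "P \<equiv> density (restrict_space lborel D) (\<lambda>\<delta>. ennreal (exp (h \<delta> / k) / Z))"
  shows "(\<integral>\<omega>. Max ((\<lambda>i. h (\<omega> i)) ` {1..M}) \<partial>(PiM {1..M} (\<lambda>_. P)))
     \<ge> integral\<^sup>L lborel (\<lambda>y. indicator D y *\<^sub>R (exp (h y / k) / Z * h y))"
proof -
  have Dm: "D \<in> sets lborel" using cD by (simp add: compact_imp_closed)
  have DmB: "D \<in> sets borel" using cD by (simp add: compact_imp_closed)
  have sP: "sets P = sets (restrict_space borel D)"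
    unfolding P_def by (simp add: sets_restrict_space_cong[OF sets_lborel])
  have spP: "space P = D" unfolding P_def by (simp add: space_restrict_space)
  have meas_c: "f \<in> borel_measurable P" if "continuous_on D f" for f :: "'b \<Rightarrow> real"
    unfolding measurable_cong_sets[OF sP refl] by (rule borel_measurable_continuous_on_restrict[OF that])
  have ce: "continuous_on D (\<lambda>y. exp (h y / k))" using k by (intro continuous_intros ch) auto
  have cp: "continuous_on D (\<lambda>y. exp (h y / k) / Z)" using k Zpos by (intro continuous_intros ch) auto
  have mp: "(\<lambda>y. exp (h y / k) / Z) \<in> borel_measurable (restrict_space lborel D)"
    using measurable_cong_sets[OF sets_restrict_space_cong[OF sets_lborel] refl]
      borel_measurable_continuous_on_restrict[OF cp] by simp
  have intp: "integrable lborel (\<lambda>y. indicator D y *\<^sub>R (exp (h y / k) / Z))"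
    by (rule borel_integrable_compact[OF cD cp])
  have "emeasure P (space P) = (\<integral>\<^sup>+ y. ennreal (exp (h y / k) / Z) * indicator D y \<partial>restrict_space lborel D)"
  proof -
    have "D \<in> sets (restrict_space lborel D)"
      using sets.top[of "restrict_space lborel D"] by (simp add: space_restrict_space)
    thus ?thesis unfolding P_def using mp by (subst emeasure_density) (auto simp: space_restrict_space)
  qed
  also have "\<dots> = (\<integral>\<^sup>+ y. ennreal (indicator D y *\<^sub>R (exp (h y / k) / Z)) \<partial>lborel)"
    using Dm by (subst nn_integral_restrict_space) (auto intro!: nn_integral_cong simp: indicator_def)
  also have "\<dots> = ennreal (integral\<^sup>L lborel (\<lambda>y. indicator D y *\<^sub>R (exp (h y / k) / Z)))"
    using intp Zpos by (intro nn_integral_eq_integral) (auto simp: indicator_def)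
  also have "integral\<^sup>L lborel (\<lambda>y. indicator D y *\<^sub>R (exp (h y / k) / Z)) = Z / Z"
  proof -
    have "integral\<^sup>L lborel (\<lambda>y. indicator D y *\<^sub>R (exp (h y / k) / Z))
        = integral\<^sup>L lborel (\<lambda>y. indicator D y *\<^sub>R exp (h y / k) / Z)" by simp
    also have "\<dots> = Z / Z" unfolding Z_def by (rule integral_divide_zero)
    finally show ?thesis .
  qed
  finally have "emeasure P (space P) = 1" using Zpos by simp
  hence probP: "prob_space P" by (rule prob_spaceI)
  let ?O = "PiM {1..M} (\<lambda>_. P)"
  have probO: "prob_space ?O" using probP by (intro prob_space_PiM) auto
  interpret O: prob_space ?O by (rule probO)
  obtain B where B: "\<And>y. y \<in> D \<Longrightarrow> norm (h y) \<le> B"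
    using compact_imp_bounded[OF compact_continuous_image[OF ch cD]] by (auto simp: bounded_iff)
  have mh: "h \<in> borel_measurable P" by (rule meas_c[OF ch])
  have sp: "\<omega> i \<in> D" if "\<omega> \<in> space ?O" "i \<in> {1..M}" for \<omega> i
    using that by (auto simp: space_PiM spP)
  have mc: "(\<lambda>\<omega>. h (\<omega> i)) \<in> borel_measurable ?O" if "i \<in> {1..M}" for i
    using measurable_compose[OF measurable_component_singleton[OF that, of "\<lambda>_. P"] mh] .
  have m1: "(\<lambda>\<omega>. h (\<omega> 1)) \<in> borel_measurable ?O"
    using M by (intro mc) auto
  have mM: "(\<lambda>\<omega>. Max ((\<lambda>i. h (\<omega> i)) ` {1..M})) \<in> borel_measurable ?O"
    by (intro borel_measurable_Max finite_atLeastAtMost mc)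
  have i1: "integrable ?O (\<lambda>\<omega>. h (\<omega> 1))"
    by (rule O.integrable_const_bound[where B=B]) (use M sp B m1 in auto)
  have iM: "integrable ?O (\<lambda>\<omega>. Max ((\<lambda>i. h (\<omega> i)) ` {1..M}))"
  proof (rule O.integrable_const_bound[where B=B])
    show "AE \<omega> in ?O. norm (Max ((\<lambda>i. h (\<omega> i)) ` {1..M})) \<le> B"
    proof (rule AE_I2)
      fix \<omega> assume w: "\<omega> \<in> space ?O"
      have ne: "(\<lambda>i. h (\<omega> i)) ` {1..M} \<noteq> {}" using M by auto
      have "Max ((\<lambda>i. h (\<omega> i)) ` {1..M}) \<in> (\<lambda>i. h (\<omega> i)) ` {1..M}" by (rule Max_in) (use ne in auto)
      then obtain i where "i \<in> {1..M}" "Max ((\<lambda>i. h (\<omega> i)) ` {1..M}) = h (\<omega> i)" by auto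
      thus "norm (Max ((\<lambda>i. h (\<omega> i)) ` {1..M})) \<le> B" using B sp[OF w] by auto
    qed
  qed (rule mM)
  have "integral\<^sup>L ?O (\<lambda>\<omega>. h (\<omega> 1)) \<le> integral\<^sup>L ?O (\<lambda>\<omega>. Max ((\<lambda>i. h (\<omega> i)) ` {1..M}))"
    using i1 iM M by (intro integral_mono_AE AE_I2) auto
  moreover have "integral\<^sup>L ?O (\<lambda>\<omega>. h (\<omega> 1)) = integral\<^sup>L P h"
  proof -
    have "integral\<^sup>L P h = integral\<^sup>L (distr ?O P (\<lambda>\<omega>. \<omega> 1)) h"
      using M probP by (subst distr_PiM_component) auto
    also have "\<dots> = integral\<^sup>L ?O (\<lambda>\<omega>. h (\<omega> 1))"
      using M by (intro integral_distr measurable_component_singleton mh) auto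
    finally show ?thesis by simp
  qed
  moreover have "integral\<^sup>L P h = integral\<^sup>L lborel (\<lambda>y. indicator D y *\<^sub>R (exp (h y / k) / Z * h y))"
  proof -
    have "integral\<^sup>L P h = integral\<^sup>L (restrict_space lborel D) (\<lambda>y. (exp (h y / k) / Z) *\<^sub>R h y)"
      unfolding P_def
      using measurable_cong_sets[OF sets_restrict_space_cong[OF sets_lborel] refl]
        borel_measurable_continuous_on_restrict[OF ch] mp Zpos
      by (subst integral_density) auto
    also have "\<dots> = integral\<^sup>L lborel (\<lambda>y. indicator D y *\<^sub>R (exp (h y / k) / Z * h y))"
      using Dm by (subst integral_restrict_space) auto
    finally show ?thesis .
  qed
  ultimately show ?thesis by simp
qed

theorem mainTheorem12:
  fixes X :: "'a::euclidean_space set"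
    and Delta :: "'b::euclidean_space set"
    and g :: "'a \<Rightarrow> 'b \<Rightarrow> real"
    and L :: real and eps :: real and x :: 'a and M :: nat
  assumes "compact X" and "convex X"
    and "compact Delta" and "convex Delta" and "interior Delta \<noteq> {}"
    and "\<And>x. x \<in> X \<Longrightarrow> L-lipschitz_on Delta (g x)"
    and "eps > 0" and "x \<in> X" and "M \<ge> 1"
  shows "(\<integral>\<delta>. Max ((\<lambda>i. g x (\<delta> i)) ` {1..M})
            \<partial>(PiM {1..M} (\<lambda>_. phi_measure g Delta (kappa L Delta eps) x)))
         \<ge> Gmax g Delta x - eps"
proof -
  note cD = assms(3) and cvx = assms(4) and eps = assms(7) and M = assms(9)
  have lip: "L-lipschitz_on Delta (g x)" using assms(6,8) by blast
  have L0: "L \<ge> 0" using lip by (simp add: lipschitz_on_def)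
  have ch: "continuous_on Delta (g x)" by (rule lipschitz_on_continuous_on[OF lip])
  define k where "k = kappa L Delta eps"
  define d where "d = real DIM('b)"
  define C where "C = constC L Delta"
  have d1: "d \<ge> 1" unfolding d_def by (simp add: DIM_positive Suc_leI)
  define m where "m = min ((eps / (2 * d))\<^sup>2) 1"
  have m0: "m > 0" using eps d1 by (simp add: m_def)
  have kdef: "k = (if C > 0 then min (eps / (2 * C)) m else m)"
    by (simp add: k_def kappa_def Let_def m_def d_def C_def)
  have k0: "k > 0" using m0 eps by (auto simp: kdef)
  have k1: "k \<le> 1" by (auto simp: kdef m_def)
  have k2: "k \<le> (eps / (2 * d))\<^sup>2" by (auto simp: kdef m_def)
  have kC: "k * C \<le> eps / 2"
  proof (cases "C > 0")
    case True
    hence "k \<le> eps / (2 * C)" by (simp add: kdef)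
    hence "k * C \<le> eps / (2 * C) * C" using True by (intro mult_right_mono) auto
    thus ?thesis using True by simp
  next
    case False
    hence "k * C \<le> 0" using k0 by (intro mult_nonneg_nonpos) auto
    thus ?thesis using eps by linarith
  qed
  have klog: "- (d * k * ln k) \<le> eps / 2"
  proof -
    define t where "t = sqrt k"
    have t0: "t > 0" using k0 by (simp add: t_def)
    have kt: "k = t\<^sup>2" using k0 by (simp add: t_def)
    have "ln (1 / t) \<le> (1 / t) / exp 1"
    proof -
      have "ln ((1 / t) / exp 1) \<le> (1 / t) / exp 1 - 1" using t0 by (intro ln_le_minus_one) auto
      moreover have "ln ((1 / t) / exp 1) = ln (1 / t) - 1" using t0 by (simp add: ln_div ln_mult)
      ultimately show ?thesis by simp
    qed
    moreover have "exp (1::real) \<ge> 2" using exp_ge_add_one_self[of 1] by simp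
    moreover have "(1 / t) / exp 1 \<le> (1 / t) / 2"
      using t0 \<open>exp 1 \<ge> 2\<close> by (intro divide_left_mono) auto
    ultimately have "ln (1 / t) \<le> 1 / (2 * t)" by simp
    hence lt: "- ln t \<le> 1 / (2 * t)" using t0 by (simp add: ln_div)
    have "- (k * ln k) = 2 * t\<^sup>2 * (- ln t)" using t0 by (simp add: kt ln_realpow)
    also have "\<dots> \<le> 2 * t\<^sup>2 * (1 / (2 * t))" using lt t0 by (intro mult_left_mono) auto
    also have "\<dots> = t" using t0 by (simp add: power2_eq_square)
    finally have "- (k * ln k) \<le> t" .
    moreover have "t \<le> eps / (2 * d)"
    proof -
      have "sqrt k \<le> sqrt ((eps / (2 * d))\<^sup>2)" by (rule real_sqrt_le_mono[OF k2])
      also have "\<dots> = eps / (2 * d)" using eps d1 by simp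
      finally show ?thesis unfolding t_def .
    qed
    ultimately have "- (k * ln k) \<le> eps / (2 * d)" by simp
    hence "d * (- (k * ln k)) \<le> d * (eps / (2 * d))" using d1 by (intro mult_left_mono) auto
    thus ?thesis using d1 by simp
  qed
  have neD: "Delta \<noteq> {}" using assms(5) interior_subset by blast
  obtain s where s: "s \<in> Delta" "\<And>y. y \<in> Delta \<Longrightarrow> g x y \<le> g x s"
    using continuous_attains_sup[OF cD neD ch] by blast
  have Gs: "Gmax g Delta x = g x s"
    unfolding Gmax_def using s by (intro cSup_eq_maximum) auto
  define S where "S = {r. r \<ge> 0 \<and> (\<exists>c. cball c r \<subseteq> Delta)}"
  define R where "R = inradius Delta"
  have RS: "R = Sup S" by (simp add: R_def inradius_def S_def)
  obtain p where "p \<in> interior Delta" using assms(5) by blast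
  then obtain e where e: "e > 0" "ball p e \<subseteq> Delta" using mem_interior by blast
  have "cball p (e / 2) \<subseteq> ball p e" using e by (simp add: cball_subset_ball_iff)
  hence pS: "cball p (e / 2) \<subseteq> Delta" using e(2) by blast
  have e2S: "e / 2 \<in> S" using pS e by (auto simp: S_def)
  obtain B0 where B0: "\<forall>y\<in>Delta. norm y \<le> B0" using compact_imp_bounded[OF cD] by (auto simp: bounded_iff)
  have B: "Delta \<subseteq> cball 0 B0" using B0 by (auto simp: mem_cball dist_norm)
  have bdd: "bdd_above S"
  proof (rule bdd_aboveI)
    fix r assume "r \<in> S"
    then obtain c where c: "r \<ge> 0" "cball c r \<subseteq> Delta" by (auto simp: S_def)
    have "cball c r \<subseteq> cball 0 B0" using c(2) B by (rule subset_trans)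
    hence "dist c 0 + r \<le> B0" using c(1) by (auto simp: cball_subset_cball_iff)
    thus "r \<le> B0" using zero_le_dist[of c 0] c(1) by linarith
  qed
  have Spos: "e / 2 \<le> R" unfolding RS using e2S bdd by (rule cSup_upper)
  have R0: "R > 0" using Spos e by simp
  define V where "V = measure lborel Delta"
  define u where "u = unit_ball_vol DIM('b)"
  have u0: "u > 0" by (simp add: u_def)
  have mball: "measure lborel (cball c r) = u * r ^ DIM('b)" if "r \<ge> 0" for c :: 'b and r
    unfolding measure_def u_def using that by (subst emeasure_cball) auto
  have V0: "V > 0"
  proof -
    have "measure lborel (cball p (e / 2)) \<le> V"
      unfolding V_def using pS cD
      by (intro measure_mono_fmeasurable) (use emeasure_compact_finite[OF cD] in \<open>auto simp: fmeasurable_def compact_imp_closed\<close>)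
    moreover have "measure lborel (cball p (e / 2)) > 0" using mball[of "e/2" p] e u0 by simp
    ultimately show ?thesis by linarith
  qed
  have lnr: "ln (vol_ratio Delta) = ln u + d * ln R - ln V"
    using mball[of R 0] R0 u0 V0
    by (simp add: vol_ratio_def R_def[symmetric] V_def[symmetric] ln_div ln_mult ln_realpow d_def)
  have Cdef: "C = L * (R + diameter Delta) - ln (vol_ratio Delta)"
    by (simp add: C_def constC_def R_def)
  define Z where "Z = integral\<^sup>L lborel (\<lambda>y. indicator Delta y *\<^sub>R exp (g x y / k))"
  define E where "E = integral\<^sup>L lborel (\<lambda>y. indicator Delta y *\<^sub>R (exp (g x y / k) / Z * g x y))"
  have Zpos: "Z > 0" unfolding Z_def using gibbs_lower(1)[OF cD ch neD V0[unfolded V_def] k0] .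
  have EZ: "E \<ge> k * (ln Z - ln V)" unfolding E_def Z_def V_def using gibbs_lower(2)[OF cD ch neD V0[unfolded V_def] k0] .
  have Pm: "phi_measure g Delta k x = density (restrict_space lborel Delta) (\<lambda>\<delta>. ennreal (exp (g x \<delta> / k) / Z))"
    by (simp add: phi_measure_def phi_def set_lebesgue_integral_def Z_def)
  have LHS: "(\<integral>\<delta>. Max ((\<lambda>i. g x (\<delta> i)) ` {1..M}) \<partial>(PiM {1..M} (\<lambda>_. phi_measure g Delta k x))) \<ge> E"
    unfolding Pm E_def using prob_part[OF cD ch k0 M Zpos[unfolded Z_def]] by (simp add: Z_def)
  have bound: "E \<ge> g x s - eps - d * k * (ln R - ln R')" if R'S: "R' \<in> S" and R'0: "R' > 0" for R'
  proof -
    obtain c where cb: "cball c R' \<subseteq> Delta" using R'S by (auto simp: S_def)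
    have ZW: "Z \<ge> u * (k * R') ^ DIM('b) * exp (g x s / k - L * diameter Delta)"
      unfolding Z_def u_def by (rule ball_lower[OF cD cvx cb R'0 k0 k1 s(1) lip])
    have W0: "u * (k * R') ^ DIM('b) > 0" using u0 k0 R'0 by simp
    have "ln Z \<ge> ln (u * (k * R') ^ DIM('b) * exp (g x s / k - L * diameter Delta))"
      using ZW W0 Zpos by (subst ln_le_cancel_iff) auto
    also have "ln (u * (k * R') ^ DIM('b) * exp (g x s / k - L * diameter Delta))
        = ln u + d * ln k + d * ln R' + (g x s / k - L * diameter Delta)"
      using u0 k0 R'0 by (simp add: ln_mult ln_realpow d_def distrib_left)
    finally have lnZ: "ln Z \<ge> ln u + d * ln k + d * ln R' + (g x s / k - L * diameter Delta)" .
    have "E \<ge> k * (ln u + d * ln k + d * ln R' + (g x s / k - L * diameter Delta) - ln V)"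
    proof -
      have "k * (ln u + d * ln k + d * ln R' + (g x s / k - L * diameter Delta) - ln V) \<le> k * (ln Z - ln V)"
        using lnZ k0 by (intro mult_left_mono) auto
      thus ?thesis using EZ by linarith
    qed
    also have "k * (ln u + d * ln k + d * ln R' + (g x s / k - L * diameter Delta) - ln V)
       = g x s - k * C + k * L * R + d * k * ln k - d * k * (ln R - ln R')"
      using k0 by (simp add: Cdef lnr field_simps)
    finally have "E \<ge> g x s - k * C + k * L * R + d * k * ln k - d * k * (ln R - ln R')" .
    moreover have "k * L * R \<ge> 0" using k0 L0 R0 by simp
    ultimately show ?thesis using kC klog by linarith
  qed
  have "E \<ge> g x s - eps"
  proof (rule ccontr)
    assume "\<not> E \<ge> g x s - eps"
    define \<eta> where "\<eta> = g x s - eps - E"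
    have \<eta>0: "\<eta> > 0" using \<open>\<not> E \<ge> g x s - eps\<close> by (simp add: \<eta>_def)
    define q where "q = R * exp (- \<eta> / (d * k))"
    have dk: "d * k > 0" using d1 k0 by simp
    have q0: "q > 0" using R0 by (simp add: q_def)
    have "exp (- \<eta> / (d * k)) < 1" using \<eta>0 dk by simp
    hence "q < R" using R0 by (simp add: q_def)
    then obtain R' where R'S: "R' \<in> S" and qR': "q < R'"
    proof -
      have Sne: "S \<noteq> {}" using e2S by blast
      show ?thesis using \<open>q < R\<close> that unfolding RS less_cSup_iff[OF Sne bdd] by blast
    qed
    have R'0: "R' > 0" using q0 qR' by simp
    have "ln q < ln R'" using q0 qR' by simp
    moreover have "ln q = ln R - \<eta> / (d * k)" using R0 by (simp add: q_def ln_mult)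
    ultimately have "ln R - ln R' < \<eta> / (d * k)" by simp
    hence "d * k * (ln R - ln R') < d * k * (\<eta> / (d * k))" using dk by (intro mult_strict_left_mono) auto
    moreover have "d * k * (\<eta> / (d * k)) = \<eta>" using d1 k0 by (simp add: field_simps)
    ultimately have "d * k * (ln R - ln R') < \<eta>" by simp
    with bound[OF R'S R'0] show False by (simp add: \<eta>_def)
  qed
  thus ?thesis using LHS Gs by (simp add: k_def)
qed

end
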